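(* Let $n\geq6$ and let $Z\in\mathbb{R}^{n\times4}$ be totally positive satisfying Assumption (G). For any $i,j,k\in[n]$ such that the pairs $\{i,i+1\},\{j,j+1\},\{k,k+1\}$ (indices mod $n$) are pairwise disjoint, the conic $L_{i(i+1)}\cap L_{j(j+1)}\cap L_{k(k+1)}\subset\mathrm{Gr}_{\mathbb{C}}(2,4)$ of lines meeting the three lines $Z_iZ_{i+1}$, $Z_jZ_{j+1}$, $Z_kZ_{k+1}$ does not intersect $\mathcal{A}_n(Z)$.
   Context: $Z$ totally positive: all $4\times4$ minors positive; its rows $Z_1,\dots,Z_n$ are points of $\mathbb{P}^3$. $\mathcal{A}_n(Z)\subset\mathrm{Gr}_{\mathbb{R}}(2,4)$ is the image of the totally nonnegative Grassmannian $\mathrm{Gr}(2,n)_{\ge0}$ under $\mathrm{rowspan}(X)\mapsto\mathrm{rowspan}(XZ)$. $\langle AB\,ij\rangle$ is the determinant of the matrix with rows $A,B,Z_i,Z_j$. Assumption (G): no line $AB$ has more than $4$ of $\langle AB\,i(i+1)\rangle$, $i\in[n]$ (cyclically), vanishing. *)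

theory Defs
  imports "HOL-Analysis.Analysis"
begin

definition bracket :: "real^4 \<Rightarrow> real^4 \<Rightarrow> real^4 \<Rightarrow> real^4 \<Rightarrow> real" where
  "bracket a b c d = det (\<chi> r::4. if r = 0 then a else if r = 1 then b else if r = 2 then c else d)"

definition cnext :: "nat \<Rightarrow> nat \<Rightarrow> nat" where
  "cnext n i = Suc i mod n"

definition totally_positive :: "nat \<Rightarrow> (nat \<Rightarrow> real^4) \<Rightarrow> bool" where
  "totally_positive n Z \<longleftrightarrow>
     (\<forall>i1 i2 i3 i4. i1 < i2 \<and> i2 < i3 \<and> i3 < i4 \<and> i4 < n \<longrightarrow>
        bracket (Z i1) (Z i2) (Z i3) (Z i4) > 0)"

definition lin_indep2 :: "real^4 \<Rightarrow> real^4 \<Rightarrow> bool" where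
  "lin_indep2 A B \<longleftrightarrow> (\<forall>s t. s *\<^sub>R A + t *\<^sub>R B = 0 \<longrightarrow> s = 0 \<and> t = 0)"

definition assumption_G :: "nat \<Rightarrow> (nat \<Rightarrow> real^4) \<Rightarrow> bool" where
  "assumption_G n Z \<longleftrightarrow>
     (\<forall>A B. lin_indep2 A B \<longrightarrow>
        card {i. i < n \<and> bracket A B (Z i) (Z (cnext n i)) = 0} \<le> 4)"

text \<open>The line spanned by A, B lies in the amplituhedron A_n(Z): it is the row span of XZ
  for some 2 x n matrix X (rows x, y) representing a point of Gr(2,n)_{>=0}
  (all ordered 2x2 minors nonnegative, rank 2).\<close>
definition in_amplituhedron :: "nat \<Rightarrow> (nat \<Rightarrow> real^4) \<Rightarrow> real^4 \<Rightarrow> real^4 \<Rightarrow> bool" where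
  "in_amplituhedron n Z A B \<longleftrightarrow>
     lin_indep2 A B \<and>
     (\<exists>x y :: nat \<Rightarrow> real.
        (\<forall>a b. a < b \<and> b < n \<longrightarrow> x a * y b - x b * y a \<ge> 0) \<and>
        (\<exists>a b. a < b \<and> b < n \<and> x a * y b - x b * y a \<noteq> 0) \<and>
        A = (\<Sum>c<n. x c *\<^sub>R Z c) \<and> B = (\<Sum>c<n. y c *\<^sub>R Z c))"

end

theory Submission
  imports Defs
begin
lemma four_cases: "(r::4) = 0 \<or> r = 1 \<or> r = 2 \<or> r = 3"
  using exhaust_4[of r] by auto
lemma "(1::4) \<noteq> 2 \<and> (0::4) \<noteq> 3" by simp
lemma swap_gen:
  fixes M N :: "real^4^4" and p q :: 4
  assumes "p \<noteq> q" and "\<And>r. N $ r = M $ (Transposition.transpose p q r)"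
  shows "det N = - det M"
proof -
  have "N = (\<chi> r. M $ Transposition.transpose p q r)" using assms(2) by (simp add: vec_eq_iff)
  then have "det N = of_int (sign (Transposition.transpose p q)) * det M"
    using det_permute_rows[of "Transposition.transpose p q" M] by (simp add: permutes_swap_id)
  then show ?thesis using assms(1) by (simp add: sign_swap_id)
qed
lemma br_swap01: "bracket b a c d = - bracket a b c d"
  unfolding bracket_def
proof (rule swap_gen[of 0 1])
  fix r :: 4
  show "(\<chi> r::4. if r = 0 then b else if r = 1 then a else if r = 2 then c else d) $ r =
    (\<chi> r::4. if r = 0 then a else if r = 1 then b else if r = 2 then c else d) $ Transposition.transpose 0 1 r"
    using four_cases[of r] by (elim disjE) (simp_all add: transpose_def)
qed simp
lemma br_swap12: "bracket a c b d = - bracket a b c d"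
  unfolding bracket_def
proof (rule swap_gen[of 1 2])
  fix r :: 4
  show "(\<chi> r::4. if r = 0 then a else if r = 1 then c else if r = 2 then b else d) $ r =
    (\<chi> r::4. if r = 0 then a else if r = 1 then b else if r = 2 then c else d) $ Transposition.transpose 1 2 r"
    using four_cases[of r] by (elim disjE) (simp_all add: transpose_def)
qed simp
lemma br_swap23: "bracket a b d c = - bracket a b c d"
  unfolding bracket_def
proof (rule swap_gen[of 2 3])
  fix r :: 4
  show "(\<chi> r::4. if r = 0 then a else if r = 1 then b else if r = 2 then d else c) $ r =
    (\<chi> r::4. if r = 0 then a else if r = 1 then b else if r = 2 then c else d) $ Transposition.transpose 2 3 r"
    using four_cases[of r] by (elim disjE) (simp_all add: transpose_def)
qed simp

lemma br_sum1: "finite S \<Longrightarrow> bracket (\<Sum>c\<in>S. f c) b c' d = (\<Sum>c\<in>S. bracket (f c) b c' d)"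
  unfolding bracket_def
  using det_linear_row_sum[of S 0 "\<lambda>i j. f j" "\<lambda>r. if r = 1 then b else if r = 2 then c' else d"]
  by simp

lemma br_scale1: "bracket (s *\<^sub>R u) b c d = s * bracket u b c d"
proof -
  have e: "s *s u = s *\<^sub>R u" by (simp add: vec_eq_iff)
  show ?thesis unfolding bracket_def
    using det_row_mul[of 0 s "\<lambda>i. u" "\<lambda>r. if r = 1 then b else if r = 2 then c else d"] unfolding e by simp
qed

lemma br_eq02: "bracket a b a d = 0"
  unfolding bracket_def by (rule det_identical_rows[of 0 2]) (auto simp: row_def vec_eq_iff)
lemma br_eq03: "bracket a b c a = 0"
  unfolding bracket_def by (rule det_identical_rows[of 0 3]) (auto simp: row_def vec_eq_iff)
lemma br_eq12: "bracket a b b d = 0"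
  unfolding bracket_def by (rule det_identical_rows[of 1 2]) (auto simp: row_def vec_eq_iff)
lemma br_eq13: "bracket a b c b = 0"
  unfolding bracket_def by (rule det_identical_rows[of 1 3]) (auto simp: row_def vec_eq_iff)
lemma br_sum2: "finite S \<Longrightarrow> bracket a (\<Sum>c\<in>S. f c) c' d = (\<Sum>c\<in>S. bracket a (f c) c' d)"
  by (subst br_swap01, simp add: br_sum1 sum_negf[symmetric], rule sum.cong, simp, subst br_swap01, simp)
lemma br_scale2: "bracket a (s *\<^sub>R u) c d = s * bracket a u c d"
  by (subst br_swap01, simp add: br_scale1, subst br_swap01, simp)

lemma expand: fixes n :: nat shows "bracket (\<Sum>c<n. x c *\<^sub>R Z c) (\<Sum>c<n. y c *\<^sub>R Z c) p q =
  (\<Sum>a<n. \<Sum>b<n. x a * y b * bracket (Z a) (Z b) p q)"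
proof -
  have "bracket (\<Sum>c<n. x c *\<^sub>R Z c) (\<Sum>c<n. y c *\<^sub>R Z c) p q =
    (\<Sum>a<n. bracket (x a *\<^sub>R Z a) (\<Sum>c<n. y c *\<^sub>R Z c) p q)"
    by (rule br_sum1) simp
  also have "\<dots> = (\<Sum>a<n. \<Sum>b<n. bracket (x a *\<^sub>R Z a) (y b *\<^sub>R Z b) p q)"
    using br_sum2[of "{..<n}"] by simp
  also have "\<dots> = (\<Sum>a<n. \<Sum>b<n. x a * y b * bracket (Z a) (Z b) p q)"
    by (intro sum.cong refl) (simp add: br_scale1 br_scale2)
  finally show ?thesis .
qed

lemma pairs:
  fixes g :: "nat \<Rightarrow> nat \<Rightarrow> real"
  assumes anti: "\<And>a b. g a b = - g b a"
  shows "(\<Sum>a<n. \<Sum>b<n. x a * y b * g a b) =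
     (\<Sum>a<n. \<Sum>b<n. if a < b then (x a * y b - x b * y a) * g a b else 0)"
proof (induction n)
  case 0 then show ?case by simp
next
  case (Suc n)
  have gnn: "g n n = 0" using anti[of n n] by simp
  have L: "(\<Sum>a<Suc n. \<Sum>b<Suc n. x a * y b * g a b) =
     (\<Sum>a<n. \<Sum>b<n. x a * y b * g a b) + (\<Sum>a<n. x a * y n * g a n) + (\<Sum>b<n. x n * y b * g n b)"
    using gnn by (simp add: sum.distrib)
  have R: "(\<Sum>a<Suc n. \<Sum>b<Suc n. if a < b then (x a * y b - x b * y a) * g a b else 0) =
     (\<Sum>a<n. \<Sum>b<n. if a < b then (x a * y b - x b * y a) * g a b else 0) + (\<Sum>a<n. (x a * y n - x n * y a) * g a n)"
    by (simp add: sum.distrib)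
  have "(\<Sum>b<n. x n * y b * g n b) = - (\<Sum>a<n. x n * y a * g a n)"
  proof -
    have e: "x n * y b * g n b = - (x n * y b * g b n)" for b
      by (metis anti mult_minus_right)
    show ?thesis unfolding e sum_negf ..
  qed
  then show ?case using L R Suc.IH by (simp add: algebra_simps sum_subtractf)
qed

lemma tp: "totally_positive n Z \<Longrightarrow> a < b \<Longrightarrow> b < c \<Longrightarrow> c < d \<Longrightarrow> d < n \<Longrightarrow>
  bracket (Z a) (Z b) (Z c) (Z d) > 0"
  unfolding totally_positive_def by blast

lemma pos:
  assumes TP: "totally_positive n Z" and n: "2 \<le> n" and i: "i < n" and ab: "a < b" "b < n"
    and na: "a \<notin> {i, cnext n i}" and nb: "b \<notin> {i, cnext n i}"
  shows "(if Suc i < n then 1 else -1) * bracket (Z a) (Z b) (Z i) (Z (cnext n i)) > 0"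
proof (cases "Suc i < n")
  case True
  then have c: "cnext n i = Suc i" by (simp add: cnext_def)
  have "b < i \<or> (a < i \<and> Suc i < b) \<or> Suc i < a" using na nb ab c by auto
  moreover have ?thesis if "b < i"
    using tp[OF TP, of a b i "Suc i"] that ab True c by simp
  moreover have ?thesis if "a < i" "Suc i < b"
    using tp[OF TP, of a i "Suc i" b] that ab True c
      br_swap12[of "Z a" "Z i" "Z b" "Z (Suc i)"] br_swap23[of "Z a" "Z i" "Z (Suc i)" "Z b"] by simp
  moreover have ?thesis if "Suc i < a"
    using tp[OF TP, of i "Suc i" a b] that ab True c
      br_swap12[of "Z a" "Z i" "Z b" "Z (Suc i)"] br_swap01[of "Z i" "Z a" "Z b" "Z (Suc i)"]
      br_swap23[of "Z i" "Z a" "Z (Suc i)" "Z b"] br_swap12[of "Z i" "Z (Suc i)" "Z a" "Z b"] by simp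
  ultimately show ?thesis by blast
next
  case False
  then have ii: "i = n - 1" using i by simp
  then have c: "cnext n i = 0" using n by (simp add: cnext_def)
  have "0 < a" "b < i" using na nb ab c ii by auto
  then show ?thesis
    using tp[OF TP, of 0 a b i] False c ii ab
      br_swap23[of "Z a" "Z b" "Z 0" "Z i"] br_swap12[of "Z a" "Z 0" "Z b" "Z i"] br_swap01[of "Z 0" "Z a" "Z b" "Z i"]
    by simp
qed

lemma zero:
  assumes "a \<in> {i, c} \<or> b \<in> {i, c}"
  shows "bracket (Z a) (Z b) (Z i) (Z c) = 0"
  using assms br_eq02 br_eq03 br_eq12 br_eq13 by auto

lemma vanish:
  fixes p :: "nat \<Rightarrow> nat \<Rightarrow> real"
  assumes TP: "totally_positive n Z" and n: "2 \<le> n" and i: "i < n"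
    and pn: "\<And>a b. a < b \<Longrightarrow> b < n \<Longrightarrow> p a b \<ge> 0"
    and S: "(\<Sum>a<n. \<Sum>b<n. if a < b then p a b * bracket (Z a) (Z b) (Z i) (Z (cnext n i)) else 0) = 0"
    and ab: "a0 < b0" "b0 < n" and pz: "p a0 b0 \<noteq> 0"
  shows "a0 \<in> {i, cnext n i} \<or> b0 \<in> {i, cnext n i}"
proof (rule ccontr)
  assume H: "\<not> ?thesis"
  define s :: real where "s = (if Suc i < n then 1 else -1)"
  define T where "T a b = (if a < b then p a b * (s * bracket (Z a) (Z b) (Z i) (Z (cnext n i))) else 0)" for a b
  have Tn: "T a b \<ge> 0" if "a < n" "b < n" for a b
  proof (cases "a < b \<and> (a \<in> {i, cnext n i} \<or> b \<in> {i, cnext n i})")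
    case True then show ?thesis unfolding T_def using zero[of a i "cnext n i" b Z] by auto
  next
    case False
    show ?thesis
    proof (cases "a < b")
      case True
      then have "s * bracket (Z a) (Z b) (Z i) (Z (cnext n i)) > 0"
        using pos[OF TP n i, of a b] False that s_def by auto
      then show ?thesis unfolding T_def using True pn[of a b] that by simp
    qed (simp add: T_def)
  qed
  have "(\<Sum>a<n. \<Sum>b<n. T a b) = s * (\<Sum>a<n. \<Sum>b<n. if a < b then p a b * bracket (Z a) (Z b) (Z i) (Z (cnext n i)) else 0)"
    unfolding T_def sum_distrib_left by (intro sum.cong refl) auto
  then have "(\<Sum>a<n. \<Sum>b<n. T a b) = 0" using S by simp
  then have "\<forall>a\<in>{..<n}. (\<Sum>b<n. T a b) = 0"
    by (subst sum_nonneg_eq_0_iff[symmetric]) (auto intro!: sum_nonneg Tn)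
  then have "(\<Sum>b<n. T a0 b) = 0" using ab by auto
  then have "T a0 b0 = 0" using ab Tn
    by (subst (asm) sum_nonneg_eq_0_iff) auto
  moreover have "T a0 b0 > 0"
  proof -
    have h1: "s * bracket (Z a0) (Z b0) (Z i) (Z (cnext n i)) > 0"
      using pos[OF TP n i ab] H unfolding s_def by blast
    have h2: "p a0 b0 > 0" using pn[OF ab] pz by linarith
    show ?thesis unfolding T_def using ab(1) mult_pos_pos[OF h2 h1] by simp
  qed
  ultimately show False by simp
qed

lemma comb: "P \<inter> Q = {} \<Longrightarrow> P \<inter> R = {} \<Longrightarrow> Q \<inter> R = {} \<Longrightarrow>
  a \<in> P \<or> b \<in> P \<Longrightarrow> a \<in> Q \<or> b \<in> Q \<Longrightarrow> a \<in> R \<or> b \<in> R \<Longrightarrow> False"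
  by blast

theorem lemma4p6:
  fixes n :: nat and Z :: "nat \<Rightarrow> real^4" and i j k :: nat
  assumes "n \<ge> 6"
    and "totally_positive n Z"
    and "assumption_G n Z"
    and "i < n" and "j < n" and "k < n"
    and "{i, cnext n i} \<inter> {j, cnext n j} = {}"
    and "{i, cnext n i} \<inter> {k, cnext n k} = {}"
    and "{j, cnext n j} \<inter> {k, cnext n k} = {}"
  shows "\<not> (\<exists>A B. in_amplituhedron n Z A B \<and>
               bracket A B (Z i) (Z (cnext n i)) = 0 \<and>
               bracket A B (Z j) (Z (cnext n j)) = 0 \<and>
               bracket A B (Z k) (Z (cnext n k)) = 0)"
proof
  assume "\<exists>A B. in_amplituhedron n Z A B \<and>
               bracket A B (Z i) (Z (cnext n i)) = 0 \<and>
               bracket A B (Z j) (Z (cnext n j)) = 0 \<and>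
               bracket A B (Z k) (Z (cnext n k)) = 0"
  then obtain A B where inA: "in_amplituhedron n Z A B"
    and zi: "bracket A B (Z i) (Z (cnext n i)) = 0"
    and zj: "bracket A B (Z j) (Z (cnext n j)) = 0"
    and zk: "bracket A B (Z k) (Z (cnext n k)) = 0"
    by blast
  from inA obtain x y where
    pn0: "\<forall>a b. a < b \<and> b < n \<longrightarrow> x a * y b - x b * y a \<ge> 0"
    and ex: "\<exists>a b. a < b \<and> b < n \<and> x a * y b - x b * y a \<noteq> 0"
    and AB: "A = (\<Sum>c<n. x c *\<^sub>R Z c)" "B = (\<Sum>c<n. y c *\<^sub>R Z c)"
    using inA unfolding in_amplituhedron_def by blast
  from ex obtain a0 b0 where ab: "a0 < b0" "b0 < n" and pz: "x a0 * y b0 - x b0 * y a0 \<noteq> 0"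
    by blast
  have pn: "\<And>a b. a < b \<Longrightarrow> b < n \<Longrightarrow> x a * y b - x b * y a \<ge> 0" using pn0 by blast
  have n2: "2 \<le> n" using assms(1) by simp
  have key: "a0 \<in> {l, cnext n l} \<or> b0 \<in> {l, cnext n l}"
    if l: "l < n" and z: "bracket A B (Z l) (Z (cnext n l)) = 0" for l
  proof (rule vanish[OF assms(2) n2 l, of "\<lambda>a b. x a * y b - x b * y a"])
    show "(\<Sum>a<n. \<Sum>b<n. if a < b then (x a * y b - x b * y a) * bracket (Z a) (Z b) (Z l) (Z (cnext n l)) else 0) = 0"
    proof -
      have anti: "\<And>a b. bracket (Z a) (Z b) (Z l) (Z (cnext n l)) = - bracket (Z b) (Z a) (Z l) (Z (cnext n l))"
        by (rule br_swap01)
      show ?thesis using z unfolding AB expand pairs[OF anti] .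
    qed
  qed (use pn ab pz in \<open>simp_all\<close>)
  show False
    using comb[OF assms(7-9) key[OF assms(4) zi] key[OF assms(5) zj] key[OF assms(6) zk]] .
qed
end
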